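(* Let $\mathbf{A}$ be a 5-dimensional LV algebra with natural basis $e_1,\dots,e_5$ such that $e_ie_j\neq\frac12(e_i+e_j)$ for $\{i,j\}\in\{\{1,2\},\{2,3\},\{3,4\},\{4,5\},\{1,5\}\}$ and $e_ie_j=\frac12(e_i+e_j)$ for $\{i,j\}\in\{\{1,3\},\{1,4\},\{2,4\},\{2,5\},\{3,5\}\}$. Then $\mathrm{Der}(\mathbf{A})=\{0\}$.
   Context: Let $\mathbb{F}$ be a field of characteristic different from $2$. A Lotka–Volterra (LV) algebra of dimension $5$ over $\mathbb{F}$ is a commutative (not necessarily associative) $\mathbb{F}$-algebra $\mathbf{A}$ with a basis $e_1,\dots,e_5$ (the natural basis) such that $e_ie_j=\alpha_{ij}e_i+\alpha_{ji}e_j$ with $\alpha_{ij}\in\mathbb{F}$, $\alpha_{ii}=\frac12$ and $\alpha_{ij}+\alpha_{ji}=1$ for all $i,j$. A derivation is a linear map $D:\mathbf{A}\to\mathbf{A}$ with $D(uv)=D(u)v+uD(v)$ for all $u,v$; $\mathrm{Der}(\mathbf{A})$ is the set of derivations. *)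

theory Defs
  imports Main
begin

datatype idx5 = I1 | I2 | I3 | I4 | I5

lemma UNIV_idx5: "(UNIV :: idx5 set) = {I1, I2, I3, I4, I5}"
  by (auto intro: idx5.exhaust)

instance idx5 :: finite
  by standard (simp add: UNIV_idx5)

text \<open>Elements of the algebra are coordinate vectors w.r.t. the natural basis.\<close>
type_synonym 'a vec5 = "idx5 \<Rightarrow> 'a"

definition basis5 :: "idx5 \<Rightarrow> 'a::field vec5" where
  "basis5 i = (\<lambda>k. if k = i then 1 else 0)"

definition vadd :: "'a::field vec5 \<Rightarrow> 'a vec5 \<Rightarrow> 'a vec5" where
  "vadd u v = (\<lambda>k. u k + v k)"

definition vscale :: "'a::field \<Rightarrow> 'a vec5 \<Rightarrow> 'a vec5" where
  "vscale c u = (\<lambda>k. c * u k)"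

text \<open>Structure constants: the k-th coordinate of e_i e_j = alpha i j e_i + alpha j i e_j.\<close>
definition lv_mult :: "(idx5 \<Rightarrow> idx5 \<Rightarrow> 'a::field) \<Rightarrow> 'a vec5 \<Rightarrow> 'a vec5 \<Rightarrow> 'a vec5" where
  "lv_mult \<alpha> u v = (\<lambda>k. \<Sum>i\<in>UNIV. \<Sum>j\<in>UNIV. u i * v j *
      ((if k = i then \<alpha> i j else 0) + (if k = j then \<alpha> j i else 0)))"

definition is_LV :: "(idx5 \<Rightarrow> idx5 \<Rightarrow> 'a::field) \<Rightarrow> bool" where
  "is_LV \<alpha> \<longleftrightarrow> (\<forall>i. \<alpha> i i = inverse 2) \<and> (\<forall>i j. \<alpha> i j + \<alpha> j i = 1)"

definition is_linear5 :: "('a::field vec5 \<Rightarrow> 'a vec5) \<Rightarrow> bool" where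
  "is_linear5 D \<longleftrightarrow> (\<forall>u v. D (vadd u v) = vadd (D u) (D v)) \<and>
                      (\<forall>c u. D (vscale c u) = vscale c (D u))"

definition is_derivation :: "(idx5 \<Rightarrow> idx5 \<Rightarrow> 'a::field) \<Rightarrow> ('a vec5 \<Rightarrow> 'a vec5) \<Rightarrow> bool" where
  "is_derivation \<alpha> D \<longleftrightarrow> is_linear5 D \<and>
     (\<forall>u v. D (lv_mult \<alpha> u v) = vadd (lv_mult \<alpha> (D u) v) (lv_mult \<alpha> u (D v)))"

definition Der :: "(idx5 \<Rightarrow> idx5 \<Rightarrow> 'a::field) \<Rightarrow> ('a vec5 \<Rightarrow> 'a vec5) set" where
  "Der \<alpha> = {D. is_derivation \<alpha> D}"

end

theory Submission
  imports Defs
begin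

lemma sum5: "(\<Sum>i\<in>UNIV. f i) = f I1 + f I2 + f I3 + f I4 + (f I5::'a::comm_monoid_add)"
  by (simp add: UNIV_idx5 add.assoc)

lemma lv_mult_coord: "lv_mult \<alpha> x y k = x k * (\<Sum>j\<in>UNIV. \<alpha> k j * y j) + y k * (\<Sum>i\<in>UNIV. \<alpha> k i * x i)"
  unfolding lv_mult_def sum5 by (cases k) (simp_all add: algebra_simps)

lemma sum_basis: "(\<Sum>j\<in>UNIV. c j * basis5 i j) = (c i :: 'a::field)"
  unfolding basis5_def by (simp add: if_distrib cong: if_cong)

lemma mult_basis: "lv_mult \<alpha> (basis5 i) (basis5 j) = vadd (vscale (\<alpha> i j) (basis5 i)) (vscale (\<alpha> j i) (basis5 j))"
  apply (rule ext)
  apply (simp only: lv_mult_coord sum_basis)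
  apply (simp add: vadd_def vscale_def basis5_def)
  done

lemma LV_half: "is_LV (\<alpha> :: idx5 \<Rightarrow> idx5 \<Rightarrow> 'a::field) \<Longrightarrow> inverse 2 + inverse 2 = (1::'a)"
proof -
  assume a: "is_LV \<alpha>"
  have h1: "\<alpha> I1 I1 = inverse 2" using a unfolding is_LV_def by blast
  have h2: "\<alpha> I1 I1 + \<alpha> I1 I1 = 1" using a unfolding is_LV_def by blast
  show ?thesis using h2 unfolding h1 .
qed

lemma LV_half': "is_LV (\<alpha> :: idx5 \<Rightarrow> idx5 \<Rightarrow> 'a::field) \<Longrightarrow> 1 - inverse 2 = (inverse 2::'a)"
  using LV_half[of \<alpha>] by (metis add_diff_cancel_right')

lemma LV_sym: "is_LV (\<alpha> :: idx5 \<Rightarrow> idx5 \<Rightarrow> 'a::field) \<Longrightarrow> \<alpha> j i = 1 - \<alpha> i j"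
proof -
  assume a: "is_LV \<alpha>"
  then have "\<alpha> i j + \<alpha> j i = 1" unfolding is_LV_def by blast
  then show ?thesis by (metis add_diff_cancel_left')
qed

lemma LV_two: "is_LV (\<alpha> :: idx5 \<Rightarrow> idx5 \<Rightarrow> 'a::field) \<Longrightarrow> (2::'a) \<noteq> 0"
proof
  assume a: "is_LV \<alpha>" and "(2::'a) = 0"
  then have "inverse (2::'a) = 0" by simp
  then show False using LV_half[OF a] by simp
qed

lemma deriv_basis:
  assumes "is_derivation \<alpha> D"
  shows "\<alpha> i j * D (basis5 i) k + \<alpha> j i * D (basis5 j) k =
     D (basis5 i) k * \<alpha> k j + (if k = j then (\<Sum>m\<in>UNIV. \<alpha> j m * D (basis5 i) m) else 0)
   + (if k = i then (\<Sum>m\<in>UNIV. \<alpha> i m * D (basis5 j) m) else 0) + D (basis5 j) k * \<alpha> k i"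
proof -
  have lin: "is_linear5 D" and d: "\<And>u v. D (lv_mult \<alpha> u v) = vadd (lv_mult \<alpha> (D u) v) (lv_mult \<alpha> u (D v))"
    using assms by (auto simp: is_derivation_def)
  have "D (lv_mult \<alpha> (basis5 i) (basis5 j)) = vadd (vscale (\<alpha> i j) (D (basis5 i))) (vscale (\<alpha> j i) (D (basis5 j)))"
    using lin by (simp add: mult_basis is_linear5_def)
  then have "vadd (vscale (\<alpha> i j) (D (basis5 i))) (vscale (\<alpha> j i) (D (basis5 j))) k = vadd (lv_mult \<alpha> (D (basis5 i)) (basis5 j)) (lv_mult \<alpha> (basis5 i) (D (basis5 j))) k"
    using d by simp
  then show ?thesis
    by (simp add: vadd_def vscale_def lv_mult_coord sum_basis) (simp add: basis5_def algebra_simps)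
qed

lemma nb_zero:
  fixes \<alpha> :: "idx5 \<Rightarrow> idx5 \<Rightarrow> 'a::field"
  assumes "is_derivation \<alpha> D" "is_LV \<alpha>" "(2::'a) \<noteq> 0" "k \<noteq> i" "\<alpha> k i \<noteq> inverse 2"
  shows "D (basis5 i) k = 0"
proof -
  have "\<alpha> i i * D (basis5 i) k + \<alpha> i i * D (basis5 i) k = D (basis5 i) k * \<alpha> k i + D (basis5 i) k * \<alpha> k i"
    using deriv_basis[OF assms(1), of i i k] assms(4) by simp
  moreover have "\<alpha> i i = inverse 2" using assms(2) by (simp add: is_LV_def)
  ultimately have "D (basis5 i) k * (1 - 2 * \<alpha> k i) = 0"
    using assms(3) by (simp add: field_simps)
  moreover have "1 - 2 * \<alpha> k i \<noteq> 0"
  proof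
    assume "1 - 2 * \<alpha> k i = 0"
    then have "\<alpha> k i = inverse 2" using assms(3) by (simp add: field_simps)
    then show False using assms(5) by simp
  qed
  ultimately show ?thesis by simp
qed

lemma chord_zero:
  fixes \<alpha> :: "idx5 \<Rightarrow> idx5 \<Rightarrow> 'a::field"
  assumes "is_derivation \<alpha> D" "i \<noteq> j" "j \<noteq> k" "i \<noteq> k" "D (basis5 j) k = 0" "\<alpha> i j \<noteq> \<alpha> k j"
  shows "D (basis5 i) k = 0"
proof -
  have "\<alpha> i j * D (basis5 i) k = D (basis5 i) k * \<alpha> k j"
    using deriv_basis[OF assms(1), of i j k] assms(2-5) by simp
  then have "D (basis5 i) k * (\<alpha> i j - \<alpha> k j) = 0" by (simp add: algebra_simps)
  then show ?thesis using assms(6) by simp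
qed

lemma chord_zero':
  fixes \<alpha> :: "idx5 \<Rightarrow> idx5 \<Rightarrow> 'a::field"
  assumes "is_derivation \<alpha> D" "D (basis5 j) k = 0" "\<alpha> i j = c" "\<alpha> k j \<noteq> c" "i \<noteq> j" "j \<noteq> k" "i \<noteq> k"
  shows "D (basis5 i) k = 0"
proof (rule chord_zero[OF assms(1,5,6,7,2)])
  show "\<alpha> i j \<noteq> \<alpha> k j" using assms(3,4) by simp
qed

lemma diag_zero:
  fixes \<alpha> :: "idx5 \<Rightarrow> idx5 \<Rightarrow> 'a::field"
  assumes "is_derivation \<alpha> D" "is_LV \<alpha>" "(2::'a) \<noteq> 0" "\<forall>m. m \<noteq> i \<longrightarrow> D (basis5 i) m = 0"
  shows "D (basis5 i) i = 0"
proof -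
  have s: "(\<Sum>m\<in>UNIV. \<alpha> i m * D (basis5 i) m) = \<alpha> i i * D (basis5 i) i"
    using assms(4) by (subst sum.remove[of UNIV i]) auto
  have "\<alpha> i i * D (basis5 i) i + \<alpha> i i * D (basis5 i) i = D (basis5 i) i * \<alpha> i i
      + (\<Sum>m\<in>UNIV. \<alpha> i m * D (basis5 i) m) + (\<Sum>m\<in>UNIV. \<alpha> i m * D (basis5 i) m) + D (basis5 i) i * \<alpha> i i"
    using deriv_basis[OF assms(1), of i i i] by simp
  then have "\<alpha> i i * D (basis5 i) i + \<alpha> i i * D (basis5 i) i = 0"
    unfolding s by algebra
  then have "2 * (\<alpha> i i * D (basis5 i) i) = 0" by (simp only: mult_2)
  then have "\<alpha> i i * D (basis5 i) i = 0" using assms(3) by simp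
  moreover have "\<alpha> i i \<noteq> 0"
  proof -
    have h: "\<alpha> i i = inverse 2" using assms(2) unfolding is_LV_def by blast
    show ?thesis
    proof
      assume "\<alpha> i i = 0"
      then have "inverse (2::'a) = 0" using h by simp
      then show False using assms(3) by simp
    qed
  qed
  ultimately show ?thesis by simp
qed

lemma vec_expand: "u = vadd (vscale (u I1) (basis5 I1)) (vadd (vscale (u I2) (basis5 I2))
   (vadd (vscale (u I3) (basis5 I3)) (vadd (vscale (u I4) (basis5 I4)) (vscale (u I5) (basis5 I5)))))"
  by (rule ext, case_tac x) (simp_all add: vadd_def vscale_def basis5_def)

lemma edge_ne:
  fixes \<alpha> :: "idx5 \<Rightarrow> idx5 \<Rightarrow> 'a::field"
  assumes "is_LV \<alpha>" "lv_mult \<alpha> (basis5 i) (basis5 j) \<noteq> vscale (inverse 2) (vadd (basis5 i) (basis5 j))"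
  shows "\<alpha> i j \<noteq> inverse 2" "\<alpha> j i \<noteq> inverse 2"
proof -
  have aj: "\<alpha> j i = 1 - \<alpha> i j" using LV_sym[OF assms(1)] .
  have "\<alpha> i j \<noteq> inverse 2"
  proof
    assume h: "\<alpha> i j = inverse 2"
    have "(1::'a) - inverse 2 = inverse 2"
      using LV_half'[OF assms(1)] .
    then have hj: "\<alpha> j i = inverse 2" using aj h by simp
    have "lv_mult \<alpha> (basis5 i) (basis5 j) = vscale (inverse 2) (vadd (basis5 i) (basis5 j))"
      apply (simp only: mult_basis h hj)
      apply (simp add: vadd_def vscale_def distrib_left)
      done
    then show False using assms(2) by simp
  qed
  then show "\<alpha> i j \<noteq> inverse 2" .
  show "\<alpha> j i \<noteq> inverse 2"
  proof
    assume "\<alpha> j i = inverse 2"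
    moreover have "\<alpha> i j = 1 - \<alpha> j i" using aj by simp
    ultimately have "\<alpha> i j = 1 - inverse 2" by simp
    moreover have "(1::'a) - inverse 2 = inverse 2"
      using LV_half'[OF assms(1)] .
    ultimately show False using \<open>\<alpha> i j \<noteq> inverse 2\<close> by simp
  qed
qed

lemma chord_eq:
  fixes \<alpha> :: "idx5 \<Rightarrow> idx5 \<Rightarrow> 'a::field"
  assumes "is_LV \<alpha>" "i \<noteq> j" "lv_mult \<alpha> (basis5 i) (basis5 j) = vscale (inverse 2) (vadd (basis5 i) (basis5 j))"
  shows "\<alpha> i j = inverse 2" "\<alpha> j i = inverse 2"
proof -
  have "lv_mult \<alpha> (basis5 i) (basis5 j) i = vscale (inverse 2) (vadd (basis5 i) (basis5 j)) i"
    using assms(3) by simp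
  then show a: "\<alpha> i j = inverse 2" using assms(2) LV_two[OF assms(1)]
    apply (simp only: mult_basis)
    apply (simp add: vadd_def vscale_def basis5_def field_simps)
    done
  have "\<alpha> j i = 1 - \<alpha> i j" using LV_sym[OF assms(1), of j i] .
  also have "\<dots> = 1 - inverse 2" using a by simp
  also have "\<dots> = inverse 2" using LV_half'[OF assms(1)] .
  finally show "\<alpha> j i = inverse 2" .
qed

theorem mainTheorem15:
  fixes \<alpha> :: "idx5 \<Rightarrow> idx5 \<Rightarrow> 'a::field"
  assumes char: "(2::'a) \<noteq> 0"
    and LV: "is_LV \<alpha>"
    and ne: "\<forall>(i, j) \<in> {(I1, I2), (I2, I3), (I3, I4), (I4, I5), (I1, I5)}.
               lv_mult \<alpha> (basis5 i) (basis5 j) \<noteq> vscale (inverse 2) (vadd (basis5 i) (basis5 j))"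
    and eq: "\<forall>(i, j) \<in> {(I1, I3), (I1, I4), (I2, I4), (I2, I5), (I3, I5)}.
               lv_mult \<alpha> (basis5 i) (basis5 j) = vscale (inverse 2) (vadd (basis5 i) (basis5 j))"
  shows "Der \<alpha> = {(\<lambda>u. (\<lambda>k. 0))}"
proof -
  have e12: "\<alpha> I1 I2 \<noteq> inverse 2" "\<alpha> I2 I1 \<noteq> inverse 2" using edge_ne[OF LV, of I1 I2] ne by auto
  have e23: "\<alpha> I2 I3 \<noteq> inverse 2" "\<alpha> I3 I2 \<noteq> inverse 2" using edge_ne[OF LV, of I2 I3] ne by auto
  have e34: "\<alpha> I3 I4 \<noteq> inverse 2" "\<alpha> I4 I3 \<noteq> inverse 2" using edge_ne[OF LV, of I3 I4] ne by auto
  have e45: "\<alpha> I4 I5 \<noteq> inverse 2" "\<alpha> I5 I4 \<noteq> inverse 2" using edge_ne[OF LV, of I4 I5] ne by auto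
  have e15: "\<alpha> I1 I5 \<noteq> inverse 2" "\<alpha> I5 I1 \<noteq> inverse 2" using edge_ne[OF LV, of I1 I5] ne by auto
  have c13: "\<alpha> I1 I3 = inverse 2" "\<alpha> I3 I1 = inverse 2" using chord_eq[OF LV, of I1 I3] eq by auto
  have c14: "\<alpha> I1 I4 = inverse 2" "\<alpha> I4 I1 = inverse 2" using chord_eq[OF LV, of I1 I4] eq by auto
  have c24: "\<alpha> I2 I4 = inverse 2" "\<alpha> I4 I2 = inverse 2" using chord_eq[OF LV, of I2 I4] eq by auto
  have c25: "\<alpha> I2 I5 = inverse 2" "\<alpha> I5 I2 = inverse 2" using chord_eq[OF LV, of I2 I5] eq by auto
  have c35: "\<alpha> I3 I5 = inverse 2" "\<alpha> I5 I3 = inverse 2" using chord_eq[OF LV, of I3 I5] eq by auto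
  have zero: "D = (\<lambda>u. (\<lambda>k. 0))" if der: "is_derivation \<alpha> D" for D
  proof -
    note nb = nb_zero[OF der LV char]
    have n12: "D (basis5 I1) I2 = 0" by (rule nb) (use e12 in auto)
    have n15: "D (basis5 I1) I5 = 0" by (rule nb) (use e15 in auto)
    have n21: "D (basis5 I2) I1 = 0" by (rule nb) (use e12 in auto)
    have n23: "D (basis5 I2) I3 = 0" by (rule nb) (use e23 in auto)
    have n32: "D (basis5 I3) I2 = 0" by (rule nb) (use e23 in auto)
    have n34: "D (basis5 I3) I4 = 0" by (rule nb) (use e34 in auto)
    have n43: "D (basis5 I4) I3 = 0" by (rule nb) (use e34 in auto)
    have n45: "D (basis5 I4) I5 = 0" by (rule nb) (use e45 in auto)
    have n54: "D (basis5 I5) I4 = 0" by (rule nb) (use e45 in auto)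
    have n51: "D (basis5 I5) I1 = 0" by (rule nb) (use e15 in auto)
    note ch' = chord_zero'[OF der]
    have n13: "D (basis5 I1) I3 = 0" by (rule ch'[OF n43 c14(1) e34(1)]) simp_all
    have n31: "D (basis5 I3) I1 = 0" by (rule ch'[OF n51 c35(1) e15(1)]) simp_all
    have n14: "D (basis5 I1) I4 = 0" by (rule ch'[OF n34 c13(1) e34(2)]) simp_all
    have n41: "D (basis5 I4) I1 = 0" by (rule ch'[OF n21 c24(2) e12(1)]) simp_all
    have n24: "D (basis5 I2) I4 = 0" by (rule ch'[OF n54 c25(1) e45(1)]) simp_all
    have n42: "D (basis5 I4) I2 = 0" by (rule ch'[OF n12 c14(2) e12(2)]) simp_all
    have n25: "D (basis5 I2) I5 = 0" by (rule ch'[OF n45 c24(1) e45(2)]) simp_all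
    have n52: "D (basis5 I5) I2 = 0" by (rule ch'[OF n32 c35(2) e23(1)]) simp_all
    have n35: "D (basis5 I3) I5 = 0" by (rule ch'[OF n15 c13(2) e15(2)]) simp_all
    have n53: "D (basis5 I5) I3 = 0" by (rule ch'[OF n23 c25(2) e23(2)]) simp_all
    note dg = diag_zero[OF der LV char]
    have n11: "D (basis5 I1) I1 = 0" by (rule dg, intro allI impI, case_tac m) (simp_all add: n12 n13 n14 n15)
    have n22: "D (basis5 I2) I2 = 0" by (rule dg, intro allI impI, case_tac m) (simp_all add: n21 n23 n24 n25)
    have n33: "D (basis5 I3) I3 = 0" by (rule dg, intro allI impI, case_tac m) (simp_all add: n31 n32 n34 n35)
    have n44: "D (basis5 I4) I4 = 0" by (rule dg, intro allI impI, case_tac m) (simp_all add: n41 n42 n43 n45)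
    have n55: "D (basis5 I5) I5 = 0" by (rule dg, intro allI impI, case_tac m) (simp_all add: n51 n52 n53 n54)
    have z: "D (basis5 i) = (\<lambda>k. 0)" for i
      by (rule ext, cases i; case_tac k) (simp_all add: n11 n12 n13 n14 n15 n21 n22 n23 n24 n25
         n31 n32 n33 n34 n35 n41 n42 n43 n44 n45 n51 n52 n53 n54 n55)
    have lin: "is_linear5 D" using der by (simp add: is_derivation_def)
    show ?thesis
    proof (rule ext)
      fix u :: "'a vec5"
      have "D u = D (vadd (vscale (u I1) (basis5 I1)) (vadd (vscale (u I2) (basis5 I2))
         (vadd (vscale (u I3) (basis5 I3)) (vadd (vscale (u I4) (basis5 I4)) (vscale (u I5) (basis5 I5))))))"
        by (subst vec_expand[of u]) simp
      also have "\<dots> = (\<lambda>k. 0)" using lin by (simp add: is_linear5_def z vadd_def vscale_def)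
      finally show "D u = (\<lambda>k. 0)" .
    qed
  qed
  have z0: "is_derivation \<alpha> (\<lambda>u. (\<lambda>k. 0))"
    by (simp add: is_derivation_def is_linear5_def vadd_def vscale_def lv_mult_def)
  show ?thesis
  proof (rule set_eqI)
    fix D :: "'a vec5 \<Rightarrow> 'a vec5"
    show "D \<in> Der \<alpha> \<longleftrightarrow> D \<in> {(\<lambda>u. (\<lambda>k. 0))}"
    proof
      assume "D \<in> Der \<alpha>"
      then have "is_derivation \<alpha> D" by (simp add: Der_def)
      then have "D = (\<lambda>u. (\<lambda>k. 0))" by (rule zero)
      then show "D \<in> {(\<lambda>u. (\<lambda>k. 0))}" by simp
    next
      assume "D \<in> {(\<lambda>u. (\<lambda>k. 0))}"
      then have "D = (\<lambda>u. (\<lambda>k. 0))" by simp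
      then show "D \<in> Der \<alpha>" using z0 by (simp add: Der_def)
    qed
  qed
qed

end
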